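(* Let $\Gamma$ be a connected graph and let $\rho,\sigma$ be equivalent frameworks of the cone graph $\Gamma*\{c\}$ in $\mathbb M^{d+1}$, with $\rho$ in general position. If $\rho$ is upper coned, then $\sigma$ is either upper coned or lower coned.
   Context: Minkowski space $\mathbb M^{d+1}$ is $\mathbb R^{d+1}$ with squared length $|x|^2=-x_1^2+\sum_{i=2}^{d+1}x_i^2$. The cone graph $\Gamma*\{c\}$ adds a new vertex $c$ to $\Gamma$ joined by an edge to every vertex of $\Gamma$. Frameworks are equivalent if $|\rho(t)-\rho(u)|^2=|\sigma(t)-\sigma(u)|^2$ for all edges. General position means every set of at most $d+2$ of the points is affinely independent. $\rho$ is upper coned if for all $t\in\mathcal V(\Gamma)$, $|\rho(t)-\rho(c)|^2<0$ and $(\rho(t)-\rho(c))_1>0$; lower coned if $|\rho(t)-\rho(c)|^2<0$ and $(\rho(t)-\rho(c))_1<0$ for all $t\in\mathcal V(\Gamma)$. *)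

theory Defs
  imports "HOL-Analysis.Analysis"
begin

text \<open>Minkowski space M^(d+1) is modelled as real \<times> 'a, where the first
  component is the time coordinate x_1 and 'a is Euclidean d-space, d = DIM('a).\<close>

definition mink_sq :: "real \<times> 'a::euclidean_space \<Rightarrow> real" where
  "mink_sq x = (snd x \<bullet> snd x) - (fst x) ^ 2"

definition is_graph :: "'v set \<Rightarrow> ('v \<Rightarrow> 'v \<Rightarrow> bool) \<Rightarrow> bool" where
  "is_graph V E \<longleftrightarrow> finite V \<and> (\<forall>u v. E u v \<longrightarrow> u \<in> V \<and> v \<in> V \<and> u \<noteq> v \<and> E v u)"

definition graph_connected :: "'v set \<Rightarrow> ('v \<Rightarrow> 'v \<Rightarrow> bool) \<Rightarrow> bool" where
  "graph_connected V E \<longleftrightarrow> V \<noteq> {} \<and>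
     (\<forall>u\<in>V. \<forall>v\<in>V. (u, v) \<in> {(x, y). x \<in> V \<and> y \<in> V \<and> E x y}\<^sup>*)"

text \<open>Cone graph \<Gamma> * {c}: vertices are Some t (t \<in> V) and the cone vertex None.\<close>
definition cone_vertices :: "'v set \<Rightarrow> 'v option set" where
  "cone_vertices V = insert None (Some ` V)"

fun cone_edge :: "'v set \<Rightarrow> ('v \<Rightarrow> 'v \<Rightarrow> bool) \<Rightarrow> 'v option \<Rightarrow> 'v option \<Rightarrow> bool" where
  "cone_edge V E (Some t) (Some u) = E t u"
| "cone_edge V E (Some t) None = (t \<in> V)"
| "cone_edge V E None (Some u) = (u \<in> V)"
| "cone_edge V E None None = False"

definition equivalent_frameworks ::
  "'w set \<Rightarrow> ('w \<Rightarrow> 'w \<Rightarrow> bool) \<Rightarrow> ('w \<Rightarrow> real \<times> 'a::euclidean_space) \<Rightarrow> ('w \<Rightarrow> real \<times> 'a) \<Rightarrow> bool" where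
  "equivalent_frameworks W F \<rho> \<sigma> \<longleftrightarrow>
     (\<forall>t\<in>W. \<forall>u\<in>W. F t u \<longrightarrow> mink_sq (\<rho> t - \<rho> u) = mink_sq (\<sigma> t - \<sigma> u))"

definition general_position :: "'w set \<Rightarrow> ('w \<Rightarrow> real \<times> 'a::euclidean_space) \<Rightarrow> bool" where
  "general_position W \<rho> \<longleftrightarrow>
     (\<forall>S\<subseteq>W. card S \<le> DIM('a) + 2 \<longrightarrow> inj_on \<rho> S \<and> \<not> affine_dependent (\<rho> ` S))"

definition upper_coned :: "'v set \<Rightarrow> ('v option \<Rightarrow> real \<times> 'a::euclidean_space) \<Rightarrow> bool" where
  "upper_coned V \<rho> \<longleftrightarrow> (\<forall>t\<in>V. mink_sq (\<rho> (Some t) - \<rho> None) < 0 \<and> fst (\<rho> (Some t) - \<rho> None) > 0)"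

definition lower_coned :: "'v set \<Rightarrow> ('v option \<Rightarrow> real \<times> 'a::euclidean_space) \<Rightarrow> bool" where
  "lower_coned V \<rho> \<longleftrightarrow> (\<forall>t\<in>V. mink_sq (\<rho> (Some t) - \<rho> None) < 0 \<and> fst (\<rho> (Some t) - \<rho> None) < 0)"

end

theory Submission
  imports Defs
begin

definition minn :: "real \<times> 'a::euclidean_space \<Rightarrow> real \<times> 'a \<Rightarrow> real" where
  "minn p q = snd p \<bullet> snd q - fst p * fst q"

lemma mink_diff: "mink_sq (p - q) = mink_sq p + mink_sq q - 2 * minn p q"
  unfolding mink_sq_def minn_def
  by (simp add: inner_diff_left inner_diff_right inner_commute power2_eq_square algebra_simps)

lemma norm_lt: assumes "mink_sq p < 0" shows "norm (snd p) < \<bar>fst p\<bar>"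
proof -
  have "norm (snd p) ^ 2 < \<bar>fst p\<bar> ^ 2" using assms
    by (simp add: mink_sq_def power2_norm_eq_inner)
  thus ?thesis using power2_less_imp_less by fastforce
qed

lemma fst_nz: assumes "mink_sq p < 0" shows "fst p \<noteq> 0"
  using norm_lt[OF assms] by auto

lemma minn_neg:
  assumes "mink_sq a < 0" "mink_sq b < 0" "fst a * fst b > 0"
  shows "minn a b < 0"
proof -
  have 1: "norm (snd a) < \<bar>fst a\<bar>" "norm (snd b) < \<bar>fst b\<bar>" using norm_lt[OF assms(1)] norm_lt[OF assms(2)] by auto
  have "snd a \<bullet> snd b \<le> norm (snd a) * norm (snd b)" by (rule norm_cauchy_schwarz)
  also have "\<dots> < \<bar>fst a\<bar> * \<bar>fst b\<bar>" using 1
    by (meson mult_strict_mono' norm_ge_zero)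
  also have "\<dots> = fst a * fst b" using assms(3) by (simp add: abs_mult[symmetric])
  finally show ?thesis by (simp add: minn_def)
qed

lemma minn_pos:
  assumes "mink_sq a < 0" "mink_sq b < 0" "fst a * fst b < 0"
  shows "minn a b > 0"
proof -
  have 1: "norm (snd a) < \<bar>fst a\<bar>" "norm (snd b) < \<bar>fst b\<bar>" using norm_lt[OF assms(1)] norm_lt[OF assms(2)] by auto
  have "- (snd a \<bullet> snd b) \<le> norm (snd a) * norm (snd b)"
    using norm_cauchy_schwarz[of "snd a" "- snd b"] by simp
  also have "\<dots> < \<bar>fst a\<bar> * \<bar>fst b\<bar>" using 1
    by (meson mult_strict_mono' norm_ge_zero)
  also have "\<dots> = - (fst a * fst b)" using assms(3) by (simp add: abs_mult[symmetric])
  finally show ?thesis by (simp add: minn_def)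
qed

lemma key:
  assumes "mink_sq a < 0" "mink_sq b < 0" "fst a > 0" "fst b > 0"
    and "mink_sq x = mink_sq a" "mink_sq y = mink_sq b" "mink_sq (a - b) = mink_sq (x - y)"
  shows "fst x > 0 \<longleftrightarrow> fst y > 0"
proof -
  have "minn a b < 0" using minn_neg[OF assms(1,2)] assms(3,4) by simp
  hence m: "minn x y < 0" using assms(5-7) mink_diff[of a b] mink_diff[of x y] by simp
  have nz: "fst x \<noteq> 0" "fst y \<noteq> 0" using fst_nz[of x] fst_nz[of y] assms(1,2,5,6) by auto
  show ?thesis
  proof (rule ccontr)
    assume "\<not> ?thesis"
    hence "fst x * fst y < 0" using nz
      by (auto simp: mult_less_0_iff)
    moreover have "mink_sq x < 0" "mink_sq y < 0" using assms(1,2,5,6) by auto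
    ultimately have "minn x y > 0" using minn_pos by blast
    with m show False by simp
  qed
qed

theorem mainTheorem19:
  fixes V :: "'v set" and E :: "'v \<Rightarrow> 'v \<Rightarrow> bool"
    and \<rho> \<sigma> :: "'v option \<Rightarrow> real \<times> 'a::euclidean_space"
  assumes "is_graph V E"
    and "graph_connected V E"
    and "equivalent_frameworks (cone_vertices V) (cone_edge V E) \<rho> \<sigma>"
    and "general_position (cone_vertices V) \<rho>"
    and "upper_coned V \<rho>"
  shows "upper_coned V \<sigma> \<or> lower_coned V \<sigma>"
proof -
  have eqc: "mink_sq (\<sigma> (Some t) - \<sigma> None) = mink_sq (\<rho> (Some t) - \<rho> None)" if "t \<in> V" for t
    using assms(3) that unfolding equivalent_frameworks_def cone_vertices_def by auto
  have eqe: "mink_sq (\<sigma> (Some t) - \<sigma> (Some u)) = mink_sq (\<rho> (Some t) - \<rho> (Some u))"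
    if "E t u" for t u
  proof -
    have "t \<in> V" "u \<in> V" using assms(1) that unfolding is_graph_def by auto
    thus ?thesis using assms(3) that unfolding equivalent_frameworks_def cone_vertices_def by auto
  qed
  have up: "mink_sq (\<rho> (Some t) - \<rho> None) < 0" "fst (\<rho> (Some t) - \<rho> None) > 0" if "t \<in> V" for t
    using assms(5) that unfolding upper_coned_def by auto
  have neg: "mink_sq (\<sigma> (Some t) - \<sigma> None) < 0" if "t \<in> V" for t
    using eqc up that by simp
  have stp: "fst (\<sigma> (Some t) - \<sigma> None) > 0 \<longleftrightarrow> fst (\<sigma> (Some u) - \<sigma> None) > 0"
    if "E t u" for t u
  proof -
    have tu: "t \<in> V" "u \<in> V" using assms(1) that unfolding is_graph_def by auto
    have d1: "(\<rho> (Some t) - \<rho> None) - (\<rho> (Some u) - \<rho> None) = \<rho> (Some t) - \<rho> (Some u)" by simp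
    have d2: "(\<sigma> (Some t) - \<sigma> None) - (\<sigma> (Some u) - \<sigma> None) = \<sigma> (Some t) - \<sigma> (Some u)" by simp
    show ?thesis
      by (rule key[OF up(1)[OF tu(1)] up(1)[OF tu(2)] up(2)[OF tu(1)] up(2)[OF tu(2)]
            eqc[OF tu(1)] eqc[OF tu(2)]]) (simp only: d1 d2 eqe[OF that])
  qed
  obtain v0 where v0: "v0 \<in> V" using assms(2) unfolding graph_connected_def by auto
  have all: "fst (\<sigma> (Some v) - \<sigma> None) > 0 \<longleftrightarrow> fst (\<sigma> (Some v0) - \<sigma> None) > 0" if "v \<in> V" for v
  proof -
    have "(v0, v) \<in> {(x, y). x \<in> V \<and> y \<in> V \<and> E x y}\<^sup>*"
      using assms(2) v0 that unfolding graph_connected_def by auto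
    thus ?thesis
    proof (induction rule: rtrancl_induct)
      case base then show ?case by simp
    next
      case (step y z) then show ?case using stp[of y z] by auto
    qed
  qed
  have nz: "fst (\<sigma> (Some v) - \<sigma> None) \<noteq> 0" if "v \<in> V" for v
    using fst_nz[OF neg[OF that]] .
  show ?thesis
  proof (cases "fst (\<sigma> (Some v0) - \<sigma> None) > 0")
    case True
    then show ?thesis using all neg unfolding upper_coned_def by auto
  next
    case False
    have "fst (\<sigma> (Some v) - \<sigma> None) < 0" if "v \<in> V" for v
      using all[OF that] False nz[OF that] by linarith
    then show ?thesis using neg unfolding lower_coned_def by auto
  qed
qed

end
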